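(* Let $S$ be a left handed skew lattice. Then $S$ satisfies the identities $x\wedge y\wedge((x\vee y)\wedge z)=x\wedge y\wedge z$ and $x\vee y\vee z=x\vee(y\wedge z)\vee y\vee z$. If moreover $S$ is strongly distributive or co-strongly distributive, then $S$ also satisfies $(x\wedge y)\vee((x\vee y)\wedge z)=(x\vee(y\wedge z))\wedge(y\vee z)$, and hence $S$ is a strong distributive solution of the Yang–Baxter equation.
   Context: A skew lattice is a set $S$ with two binary operations $\wedge,\vee$, each idempotent and associative, satisfying the absorption laws $x\wedge(x\vee y)=x=x\vee(x\wedge y)$ and $(x\wedge y)\vee y=y=(x\vee y)\wedge y$ for all $x,y\in S$. $S$ is left handed if $x\wedge y\wedge x=x\wedge y$ for all $x,y$ (equivalently $x\vee y\vee x=y\vee x$). $S$ is strongly distributive if it satisfies $(x\vee y)\wedge z=(x\wedge z)\vee(y\wedge z)$ and $x\wedge(y\vee z)=(x\wedge y)\vee(x\wedge z)$; it is co-strongly distributive if it satisfies $(x\wedge y)\vee z=(x\vee z)\wedge(y\vee z)$ and $x\vee(y\wedge z)=(x\vee y)\wedge(x\vee z)$. A skew lattice $S$ is a strong distributive solution if the map $r(x,y)=(x\wedge y,x\vee y)$ on $S\times S$ satisfies $(r\times\mathrm{id})\circ(\mathrm{id}\times r)\circ(r\times\mathrm{id})=(\mathrm{id}\times r)\circ(r\times\mathrm{id})\circ(\mathrm{id}\times r)$. *)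

theory Defs
  imports Main
begin

definition skew_lattice :: "('a \<Rightarrow> 'a \<Rightarrow> 'a) \<Rightarrow> ('a \<Rightarrow> 'a \<Rightarrow> 'a) \<Rightarrow> bool" where
  "skew_lattice m j \<longleftrightarrow>
     (\<forall>x. m x x = x) \<and> (\<forall>x. j x x = x) \<and>
     (\<forall>x y z. m (m x y) z = m x (m y z)) \<and>
     (\<forall>x y z. j (j x y) z = j x (j y z)) \<and>
     (\<forall>x y. m x (j x y) = x \<and> j x (m x y) = x) \<and>
     (\<forall>x y. j (m x y) y = y \<and> m (j x y) y = y)"

definition left_handed :: "('a \<Rightarrow> 'a \<Rightarrow> 'a) \<Rightarrow> ('a \<Rightarrow> 'a \<Rightarrow> 'a) \<Rightarrow> bool" where
  "left_handed m j \<longleftrightarrow> (\<forall>x y. m (m x y) x = m x y)"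

definition strongly_distributive :: "('a \<Rightarrow> 'a \<Rightarrow> 'a) \<Rightarrow> ('a \<Rightarrow> 'a \<Rightarrow> 'a) \<Rightarrow> bool" where
  "strongly_distributive m j \<longleftrightarrow>
     (\<forall>x y z. m (j x y) z = j (m x z) (m y z)) \<and>
     (\<forall>x y z. m x (j y z) = j (m x y) (m x z))"

definition co_strongly_distributive :: "('a \<Rightarrow> 'a \<Rightarrow> 'a) \<Rightarrow> ('a \<Rightarrow> 'a \<Rightarrow> 'a) \<Rightarrow> bool" where
  "co_strongly_distributive m j \<longleftrightarrow>
     (\<forall>x y z. j (m x y) z = m (j x z) (j y z)) \<and>
     (\<forall>x y z. j x (m y z) = m (j x y) (j x z))"

definition skew_r :: "('a \<Rightarrow> 'a \<Rightarrow> 'a) \<Rightarrow> ('a \<Rightarrow> 'a \<Rightarrow> 'a) \<Rightarrow> 'a \<times> 'a \<Rightarrow> 'a \<times> 'a" where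
  "skew_r m j p = (m (fst p) (snd p), j (fst p) (snd p))"

definition r12 :: "('a \<times> 'a \<Rightarrow> 'a \<times> 'a) \<Rightarrow> 'a \<times> 'a \<times> 'a \<Rightarrow> 'a \<times> 'a \<times> 'a" where
  "r12 r t = (case t of (a, b, c) \<Rightarrow> (case r (a, b) of (a', b') \<Rightarrow> (a', b', c)))"

definition r23 :: "('a \<times> 'a \<Rightarrow> 'a \<times> 'a) \<Rightarrow> 'a \<times> 'a \<times> 'a \<Rightarrow> 'a \<times> 'a \<times> 'a" where
  "r23 r t = (case t of (a, b, c) \<Rightarrow> (case r (b, c) of (b', c') \<Rightarrow> (a, b', c')))"

definition strong_distributive_solution :: "('a \<Rightarrow> 'a \<Rightarrow> 'a) \<Rightarrow> ('a \<Rightarrow> 'a \<Rightarrow> 'a) \<Rightarrow> bool" where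
  "strong_distributive_solution m j \<longleftrightarrow>
     (let r = skew_r m j in r12 r \<circ> r23 r \<circ> r12 r = r23 r \<circ> r12 r \<circ> r23 r)"

end

theory Submission
  imports Defs
begin

theorem mainTheorem7:
  fixes m j :: "'a \<Rightarrow> 'a \<Rightarrow> 'a"
  assumes "skew_lattice m j" and "left_handed m j"
  shows "(\<forall>x y z. m (m x y) (m (j x y) z) = m (m x y) z) \<and>
         (\<forall>x y z. j (j x y) z = j (j (j x (m y z)) y) z) \<and>
         ((strongly_distributive m j \<or> co_strongly_distributive m j) \<longrightarrow>
            (\<forall>x y z. j (m x y) (m (j x y) z) = m (j x (m y z)) (j y z)) \<and>
            strong_distributive_solution m j)"
proof -
  have mi: "\<And>x. m x x = x" and ji: "\<And>x. j x x = x"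
   and ma: "\<And>x y z. m (m x y) z = m x (m y z)"
   and ja: "\<And>x y z. j (j x y) z = j x (j y z)"
   and ab1: "\<And>x y. m x (j x y) = x" and ab2: "\<And>x y. j x (m x y) = x"
   and ab3: "\<And>x y. j (m x y) y = y" and ab4: "\<And>x y. m (j x y) y = y"
    using assms(1) unfolding skew_lattice_def by auto
  have lh: "\<And>x y. m (m x y) x = m x y" using assms(2) unfolding left_handed_def by auto
  have L1: "\<And>x y. m y (j x y) = y"
  proof -
    fix x y
    have "m y (j x y) = m (m y (j x y)) y" using lh by simp
    also have "\<dots> = m y y" by (simp add: ma ab4)
    finally show "m y (j x y) = y" by (simp add: mi)
  qed
  have JL: "\<And>x y. j x (j y x) = j y x"
  proof -
    fix x y
    have "j x (j y x) = j (m x (j y x)) (j y x)" by (simp add: L1)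
    also have "\<dots> = j y x" by (simp add: ab3)
    finally show "j x (j y x) = j y x" .
  qed
  have I1: "\<forall>x y z. m (m x y) (m (j x y) z) = m (m x y) z"
    by (simp add: ma L1 flip: ma[of y "j x y" for x y])
  have L2: "\<And>y z. j (m y z) y = y"
  proof -
    fix y z
    have "j (m y z) y = j (m (m y z) y) y" by (simp add: lh)
    also have "\<dots> = y" by (simp add: ab3)
    finally show "j (m y z) y = y" .
  qed
  have I2: "\<forall>x y z. j (j x y) z = j (j (j x (m y z)) y) z"
    by (simp add: ja L2 flip: ja[of "m y z" y for y z])
  have I3: "(strongly_distributive m j \<or> co_strongly_distributive m j) \<longrightarrow>
            (\<forall>x y z. j (m x y) (m (j x y) z) = m (j x (m y z)) (j y z))"
  proof
    assume "strongly_distributive m j \<or> co_strongly_distributive m j"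
    then show "\<forall>x y z. j (m x y) (m (j x y) z) = m (j x (m y z)) (j y z)"
    proof
      assume "strongly_distributive m j"
      then have d1: "\<And>x y z. m (j x y) z = j (m x z) (m y z)"
        and d2: "\<And>x y z. m x (j y z) = j (m x y) (m x z)"
        unfolding strongly_distributive_def by auto
      show ?thesis
      proof (intro allI)
        fix x y z
        have "j (m x y) (m (j x y) z) = j (m x (j y z)) (m y z)"
          by (simp add: d1 d2 ja)
        also have "\<dots> = j (m x (j y z)) (m y (m z (j y z)))"
          by (simp add: L1)
        also have "\<dots> = m (j x (m y z)) (j y z)"
          by (simp only: d1 ma)
        finally show "j (m x y) (m (j x y) z) = m (j x (m y z)) (j y z)" .
      qed
    next
      assume "co_strongly_distributive m j"
      then have d1: "\<And>x y z. j (m x y) z = m (j x z) (j y z)"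
        and d2: "\<And>x y z. j x (m y z) = m (j x y) (j x z)"
        unfolding co_strongly_distributive_def by auto
      show ?thesis
      proof (intro allI)
        fix x y z
        have "j (m x y) (m (j x y) z) = m (j x (m (j x y) z)) (j y (m (j x y) z))"
          by (simp add: d1)
        also have "\<dots> = m (m (j x y) (j x z)) (m (j x y) (j y z))"
          by (simp add: d2 JL ji flip: ja)
        also have "\<dots> = m (m (m (j x y) (j x z)) (j x y)) (j y z)"
          by (simp add: ma)
        also have "\<dots> = m (j x (m y z)) (j y z)"
          by (simp add: lh d2)
        finally show "j (m x y) (m (j x y) z) = m (j x (m y z)) (j y z)" .
      qed
    qed
  qed
  have YB: "(\<forall>x y z. j (m x y) (m (j x y) z) = m (j x (m y z)) (j y z)) \<Longrightarrow>
            strong_distributive_solution m j"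
    unfolding strong_distributive_solution_def Let_def
    apply (rule ext)
    apply (clarsimp simp: r12_def r23_def skew_r_def)
    using I1 I2 by (metis ma ja)
  show ?thesis using I1 I2 I3 YB by blast
qed

end
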